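(* Let $X$ be a set, $B\subseteq\mathbb{R}^X$ an $\mathbb{R}$-subalgebra and $Q\subseteq B$ a quadratic module with $K_{Q,X}=X$ and $\overline{m(X)}=K_{Q,Y_B}$. Let $f\in\mathbb{R}^X$ and $A=B[f]\subseteq\mathbb{R}^X$. In each of the following cases, $K_{Q',X}=X$ and $\overline{m(X)}=K_{Q',Y_A}$: (1) $f=\sqrt[r]{g}$ (pointwise real $r$-th root) with $r$ odd and $g\in B$, and $Q'$ is the quadratic module of $A$ generated by $Q$; (2) $f=\sqrt[s]{g}$ (pointwise nonnegative $s$-th root) with $s$ even, $g\in B$, $g\ge0$ on $X$, and $Q'$ is the quadratic module of $A$ generated by $Q$ and $f$; (3) $f=\frac1g$ with $g\in B$, $g(x)\ne0$ for all $x\in X$, and $Q'$ is the quadratic module of $A$ generated by $Q$; (4) $f=g\cdot\chi_{\{q\ge0\}}+h\cdot\chi_{\{q<0\}}$ for some $g,h,q\in B$ such that for $y\in K_{Q,Y_B}$, $\hat q(y)=0$ implies $\hat g(y)=\hat h(y)$, and $Q'$ is the quadratic module of $A$ generated by $Q$ and $-q(f-g)^2$, $q(f-h)^2$; (5) $f=\chi_{\{q\ge0\}}$ for some $q\in B$ satisfying $\{y\in K_{Q,Y_B}\mid\hat q(y)=0\}\subseteq\overline{\{y\in K_{Q,Y_B}\mid\hat q(y)>0\}}\cap\overline{\{y\in K_{Q,Y_B}\mid\hat q(y)<0\}}$, and $Q'$ is the quadratic module of $A$ generated by $Q$ and $qf$, $q(f-1)$.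
   Context: A quadratic module of a commutative unital $\mathbb{R}$-algebra $C$ is a subset $Q\subseteq C$ with $Q+Q\subseteq Q$, $c^2Q\subseteq Q$ for all $c\in C$, and $1\in Q$. For an $\mathbb{R}$-subalgebra $C\subseteq\mathbb{R}^X$ and a quadratic module $Q$ of $C$: $K_{Q,X}:=\{x\in X\mid g(x)\ge0\ \forall g\in Q\}$; $Y_C$ is the set of unital $\mathbb{R}$-algebra homomorphisms $C\to\mathbb{R}$; for $c\in C$, $\hat c\colon Y_C\to\mathbb{R}$, $\hat c(y)=y(c)$; $Y_C$ has the weakest topology making all $\hat c$ continuous; $K_{Q,Y_C}:=\{y\in Y_C\mid \hat g(y)\ge0\ \forall g\in Q\}$; $m\colon X\to Y_C$, $m(x)(c)=c(x)$. Overlines on subsets of $Y_C$ denote closure in $Y_C$. $\chi_S$ denotes the characteristic function of $S\subseteq X$, and $\{q\ge0\}=\{x\in X\mid q(x)\ge0\}$, etc. *)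

theory Defs
  imports "HOL-Analysis.Analysis"
begin

text \<open>The set X is modelled as the universe of a type 'a; elements of R^X are
functions 'a \<Rightarrow> real.\<close>

definition is_subalgebra :: "('a \<Rightarrow> real) set \<Rightarrow> bool" where
  "is_subalgebra C \<longleftrightarrow>
     (\<forall>c::real. (\<lambda>_. c) \<in> C) \<and>
     (\<forall>f\<in>C. \<forall>g\<in>C. (\<lambda>x. f x + g x) \<in> C \<and> (\<lambda>x. f x * g x) \<in> C)"

definition adjoin :: "('a \<Rightarrow> real) set \<Rightarrow> ('a \<Rightarrow> real) \<Rightarrow> ('a \<Rightarrow> real) set" where
  "adjoin B f = \<Inter> {A. is_subalgebra A \<and> B \<subseteq> A \<and> f \<in> A}"

definition is_quadmod :: "('a \<Rightarrow> real) set \<Rightarrow> ('a \<Rightarrow> real) set \<Rightarrow> bool" where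
  "is_quadmod C Q \<longleftrightarrow> Q \<subseteq> C \<and>
     (\<forall>p\<in>Q. \<forall>q\<in>Q. (\<lambda>x. p x + q x) \<in> Q) \<and>
     (\<forall>c\<in>C. \<forall>p\<in>Q. (\<lambda>x. (c x)\<^sup>2 * p x) \<in> Q) \<and>
     (\<lambda>_. 1) \<in> Q"

definition qm_gen :: "('a \<Rightarrow> real) set \<Rightarrow> ('a \<Rightarrow> real) set \<Rightarrow> ('a \<Rightarrow> real) set" where
  "qm_gen C S = \<Inter> {Q. is_quadmod C Q \<and> S \<subseteq> Q}"

definition KX :: "('a \<Rightarrow> real) set \<Rightarrow> 'a set" where
  "KX Q = {x. \<forall>g\<in>Q. g x \<ge> 0}"

text \<open>Y_C: unital R-algebra homomorphisms C \<rightarrow> R, represented as functions on C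
(extensional: undefined outside C).\<close>
definition Ychar :: "('a \<Rightarrow> real) set \<Rightarrow> (('a \<Rightarrow> real) \<Rightarrow> real) set" where
  "Ychar C = {y \<in> extensional C.
      (\<forall>f\<in>C. \<forall>g\<in>C. y (\<lambda>x. f x + g x) = y f + y g \<and> y (\<lambda>x. f x * g x) = y f * y g) \<and>
      (\<forall>c::real. \<forall>f\<in>C. y (\<lambda>x. c * f x) = c * y f) \<and>
      y (\<lambda>_. 1) = 1}"

text \<open>The weakest topology on Y_C making all evaluation maps continuous, i.e. the
subspace topology of the product topology on R^C.\<close>
definition Ytop :: "('a \<Rightarrow> real) set \<Rightarrow> (('a \<Rightarrow> real) \<Rightarrow> real) topology" where
  "Ytop C = subtopology (product_topology (\<lambda>_. euclideanreal) C) (Ychar C)"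

definition mmap :: "('a \<Rightarrow> real) set \<Rightarrow> 'a \<Rightarrow> (('a \<Rightarrow> real) \<Rightarrow> real)" where
  "mmap C x = restrict (\<lambda>c. c x) C"

definition KY :: "('a \<Rightarrow> real) set \<Rightarrow> ('a \<Rightarrow> real) set \<Rightarrow> (('a \<Rightarrow> real) \<Rightarrow> real) set" where
  "KY C Q = {y \<in> Ychar C. \<forall>g\<in>Q. y g \<ge> 0}"

definition good :: "('a \<Rightarrow> real) set \<Rightarrow> ('a \<Rightarrow> real) set \<Rightarrow> bool" where
  "good C Q \<longleftrightarrow> KX Q = UNIV \<and> (Ytop C) closure_of (mmap C ` UNIV) = KY C Q"

end

theory Submission
  imports Defs
begin


lemma sa_const: "is_subalgebra C \<Longrightarrow> (\<lambda>_. c) \<in> C" by (simp add: is_subalgebra_def)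
lemma sa_add: "is_subalgebra C \<Longrightarrow> a \<in> C \<Longrightarrow> b \<in> C \<Longrightarrow> (\<lambda>x. a x + b x) \<in> C" by (simp add: is_subalgebra_def)
lemma sa_mult: "is_subalgebra C \<Longrightarrow> a \<in> C \<Longrightarrow> b \<in> C \<Longrightarrow> (\<lambda>x. a x * b x) \<in> C" by (simp add: is_subalgebra_def)
lemma sa_smult: "is_subalgebra C \<Longrightarrow> a \<in> C \<Longrightarrow> (\<lambda>x. c * a x) \<in> C"
  using sa_mult[of C "\<lambda>_. c" a] sa_const by auto
lemma sa_neg: "is_subalgebra C \<Longrightarrow> a \<in> C \<Longrightarrow> (\<lambda>x. - a x) \<in> C"
  using sa_smult[of C a "-1"] by simp
lemma sa_diff: "is_subalgebra C \<Longrightarrow> a \<in> C \<Longrightarrow> b \<in> C \<Longrightarrow> (\<lambda>x. a x - b x) \<in> C"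
  using sa_add[of C a "\<lambda>x. - b x"] sa_neg[of C b] by simp
lemma sa_pow: "is_subalgebra C \<Longrightarrow> a \<in> C \<Longrightarrow> (\<lambda>x. a x ^ n) \<in> C"
  by (induction n) (auto simp: sa_const sa_mult)

lemmas sa_simps = sa_const sa_add sa_mult sa_smult sa_neg sa_diff sa_pow

lemma Y_add: "y \<in> Ychar C \<Longrightarrow> a \<in> C \<Longrightarrow> b \<in> C \<Longrightarrow> y (\<lambda>x. a x + b x) = y a + y b"
  by (simp add: Ychar_def)
lemma Y_mult: "y \<in> Ychar C \<Longrightarrow> a \<in> C \<Longrightarrow> b \<in> C \<Longrightarrow> y (\<lambda>x. a x * b x) = y a * y b"
  by (simp add: Ychar_def)
lemma Y_smult: "y \<in> Ychar C \<Longrightarrow> a \<in> C \<Longrightarrow> y (\<lambda>x. c * a x) = c * y a"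
  by (simp add: Ychar_def)
lemma Y_const: "is_subalgebra C \<Longrightarrow> y \<in> Ychar C \<Longrightarrow> y (\<lambda>_. c) = c"
proof -
  assume C: "is_subalgebra C" and y: "y \<in> Ychar C"
  have "y (\<lambda>x. c * (\<lambda>_. 1::real) x) = c * y (\<lambda>_. 1)"
    by (rule Y_smult[OF y sa_const[OF C]])
  moreover have "y (\<lambda>_. 1) = 1" using y by (simp add: Ychar_def)
  ultimately show ?thesis by simp
qed
lemma Y_neg: "y \<in> Ychar C \<Longrightarrow> a \<in> C \<Longrightarrow> y (\<lambda>x. - a x) = - y a"
  using Y_smult[of y C a "-1"] by simp
lemma Y_diff: "is_subalgebra C \<Longrightarrow> y \<in> Ychar C \<Longrightarrow> a \<in> C \<Longrightarrow> b \<in> C \<Longrightarrow> y (\<lambda>x. a x - b x) = y a - y b"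
  using Y_add[of y C a "\<lambda>x. - b x"] Y_neg[of y C b] sa_neg[of C b] by simp
lemma Y_pow: "is_subalgebra C \<Longrightarrow> y \<in> Ychar C \<Longrightarrow> a \<in> C \<Longrightarrow> y (\<lambda>x. a x ^ n) = y a ^ n"
proof (induction n)
  case 0 then show ?case using Y_const[of C y 1] by simp
next
  case (Suc n)
  have "y (\<lambda>x. a x ^ Suc n) = y (\<lambda>x. a x * a x ^ n)" by simp
  also have "\<dots> = y a * y (\<lambda>x. a x ^ n)" using Suc.prems by (intro Y_mult) (auto simp: sa_pow)
  finally show ?case using Suc by simp
qed

lemmas Y_simps = Y_add Y_mult Y_smult Y_const Y_neg Y_diff Y_pow

lemma adjoin_sa: "is_subalgebra (adjoin B f)"
  unfolding adjoin_def is_subalgebra_def by blast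
lemma adjoin_B: "B \<subseteq> adjoin B f" unfolding adjoin_def by blast
lemma adjoin_f: "f \<in> adjoin B f" unfolding adjoin_def by blast
lemma adjoin_least: "is_subalgebra G \<Longrightarrow> B \<subseteq> G \<Longrightarrow> f \<in> G \<Longrightarrow> adjoin B f \<subseteq> G"
  unfolding adjoin_def by blast

lemma mmap_Y: "is_subalgebra C \<Longrightarrow> mmap C x \<in> Ychar C"
  unfolding Ychar_def mmap_def by (auto simp: sa_simps)

lemma topspace_Ytop: "topspace (Ytop C) = Ychar C"
  unfolding Ytop_def by (auto simp: Ychar_def PiE_def)

lemma cont_eval: "c \<in> C \<Longrightarrow> continuous_map (Ytop C) euclideanreal (\<lambda>z. z c)"
  unfolding Ytop_def
  by (intro continuous_map_from_subtopology continuous_map_product_projection)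

lemma open_basic:
  assumes "finite F" "F \<subseteq> C" "\<And>c. c \<in> F \<Longrightarrow> open (U c)"
  shows "openin (Ytop C) {z \<in> Ychar C. \<forall>c\<in>F. z c \<in> U c}"
proof -
  have "{z \<in> Ychar C. \<forall>c\<in>F. z c \<in> U c} = \<Inter> (insert (topspace (Ytop C)) ((\<lambda>c. {z \<in> topspace (Ytop C). z c \<in> U c}) ` F))"
    by (auto simp: topspace_Ytop)
  also have "openin (Ytop C) \<dots>"
    using assms by (intro openin_Inter) (auto intro!: openin_continuous_map_preimage[OF cont_eval])
  finally show ?thesis .
qed

lemma closed_KY: "closedin (Ytop C) (KY C Q)" if "Q \<subseteq> C"
proof -
  have e: "KY C Q = \<Inter> (insert (topspace (Ytop C)) ((\<lambda>g. {z \<in> topspace (Ytop C). z g \<in> {0..}}) ` Q))"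
    by (auto simp: topspace_Ytop KY_def)
  have h: "closedin (Ytop C) {z \<in> topspace (Ytop C). z g \<in> {0..}}" if "g \<in> Q" for g
    using \<open>Q \<subseteq> C\<close> that by (intro closedin_continuous_map_preimage[OF cont_eval]) auto
  have "closedin (Ytop C) (\<Inter> (insert (topspace (Ytop C)) ((\<lambda>g. {z \<in> topspace (Ytop C). z g \<in> {0..}}) ` Q)))"
    using h by (intro closedin_Inter) auto
  then show ?thesis using e by simp

qed



lemma approx_in_closure:
  assumes B: "is_subalgebra B" and y: "y \<in> Ychar (adjoin B f)"
    and H: "\<And>F \<epsilon>. finite F \<Longrightarrow> F \<subseteq> B \<Longrightarrow> \<epsilon> > 0 \<Longrightarrow>
              \<exists>x. (\<forall>c\<in>F. \<bar>c x - y c\<bar> < \<epsilon>) \<and> \<bar>f x - y f\<bar> < \<epsilon>"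
  shows "y \<in> Ytop (adjoin B f) closure_of (mmap (adjoin B f) ` UNIV)"
proof -
  define A where "A = adjoin B f"
  have As: "is_subalgebra A" unfolding A_def by (rule adjoin_sa)
  have yA: "y \<in> Ychar A" using y A_def by simp
  define I where "I = {(F, \<delta>::real). finite F \<and> F \<subseteq> B \<and> \<delta> > 0}"
  define S where "S = (\<lambda>(F, \<delta>). {x. (\<forall>c\<in>F. \<bar>c x - y c\<bar> < \<delta>) \<and> \<bar>f x - y f\<bar> < \<delta>})"
  define Fy where "Fy = (INF i\<in>I. principal (S i))"
  have ev: "eventually P Fy \<longleftrightarrow> (\<exists>i\<in>I. \<forall>x\<in>S i. P x)" for P
    unfolding Fy_def
  proof (subst eventually_INF_base)
    show "I \<noteq> {}" proof - have "({}, 1) \<in> I" unfolding I_def by simp then show ?thesis by blast qed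
    show "\<exists>k\<in>I. principal (S k) \<le> inf (principal (S i)) (principal (S j))" if "i \<in> I" "j \<in> I" for i j
    proof -
      obtain F1 d1 F2 d2 where ij: "i = (F1, d1)" "j = (F2, d2)" by (cases i, cases j) auto
      show ?thesis using that unfolding ij I_def S_def
        by (intro bexI[of _ "(F1 \<union> F2, min d1 d2)"]) auto
    qed
  qed (simp add: eventually_principal)
  have nb: "Fy \<noteq> bot"
  proof
    assume "Fy = bot"
    then have "eventually (\<lambda>_. False) Fy" by simp
    then obtain F d where "(F, d) \<in> I" "\<forall>x\<in>S (F, d). False" unfolding ev by auto
    with H[of F d] show False unfolding I_def S_def by auto
  qed
  have tB: "(c \<longlongrightarrow> y c) Fy" if "c \<in> B" for c
  proof (rule tendstoI)
    fix e :: real assume "e > 0"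
    show "eventually (\<lambda>x. dist (c x) (y c) < e) Fy"
      unfolding ev using that \<open>e > 0\<close>
      by (intro bexI[of _ "({c}, e)"]) (auto simp: I_def S_def dist_real_def)
  qed
  have tf: "(f \<longlongrightarrow> y f) Fy"
  proof (rule tendstoI)
    fix e :: real assume "e > 0"
    show "eventually (\<lambda>x. dist (f x) (y f) < e) Fy"
      unfolding ev using \<open>e > 0\<close>
      by (intro bexI[of _ "({}, e)"]) (auto simp: I_def S_def dist_real_def)
  qed
  define G where "G = {a \<in> A. (a \<longlongrightarrow> y a) Fy}"
  have "is_subalgebra G"
    unfolding is_subalgebra_def G_def
    using As yA by (auto simp: sa_simps Y_simps intro!: tendsto_add tendsto_mult)
  moreover have "B \<subseteq> G" using tB adjoin_B unfolding G_def A_def by blast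
  moreover have "f \<in> G" using tf adjoin_f unfolding G_def A_def by blast
  ultimately have AG: "A \<subseteq> G" unfolding A_def by (rule adjoin_least)
  show ?thesis
    unfolding A_def[symmetric] in_closure_of
  proof (intro conjI allI impI)
    show "y \<in> topspace (Ytop A)" using yA by (simp add: topspace_Ytop)
    fix T assume T: "y \<in> T \<and> openin (Ytop A) T"
    then obtain U where U: "openin (product_topology (\<lambda>_. euclideanreal) A) U" "T = U \<inter> Ychar A"
      unfolding Ytop_def openin_subtopology by auto
    then have "y \<in> U" using T by auto
    then obtain V where V: "finite {i \<in> A. V i \<noteq> UNIV}" "\<forall>i\<in>A. open (V i)"
      "y \<in> Pi\<^sub>E A V" "Pi\<^sub>E A V \<subseteq> U"
      using U(1) unfolding openin_product_topology_alt by auto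
    define F where "F = {i \<in> A. V i \<noteq> UNIV}"
    have "eventually (\<lambda>x. c x \<in> V c) Fy" if "c \<in> F" for c
    proof -
      have "c \<in> A" "open (V c)" "y c \<in> V c" using that V unfolding F_def by (auto simp: PiE_iff)
      moreover have "(c \<longlongrightarrow> y c) Fy" using AG \<open>c \<in> A\<close> unfolding G_def by auto
      ultimately show ?thesis using topological_tendstoD by blast
    qed
    then have "eventually (\<lambda>x. \<forall>c\<in>F. c x \<in> V c) Fy"
      using V(1) unfolding F_def[symmetric] by (intro eventually_ball_finite) auto
    then obtain x where x: "\<forall>c\<in>F. c x \<in> V c" using eventually_happens'[OF nb] by blast
    have "mmap A x \<in> Pi\<^sub>E A V" using x unfolding F_def mmap_def by (auto simp: PiE_iff)
    then have "mmap A x \<in> T" using V(4) U(2) mmap_Y[OF As] by auto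
    then show "\<exists>z. z \<in> mmap A ` UNIV \<and> z \<in> T" by blast
  qed
qed



lemma qm_gen_sub: "S \<subseteq> qm_gen C S" unfolding qm_gen_def by blast
lemma qm_gen_least: "is_quadmod C P \<Longrightarrow> S \<subseteq> P \<Longrightarrow> qm_gen C S \<subseteq> P"
  unfolding qm_gen_def by blast

lemma nonneg_quadmod: "is_subalgebra C \<Longrightarrow> is_quadmod C {a \<in> C. \<forall>x. a x \<ge> 0}"
  unfolding is_quadmod_def by (auto simp: sa_simps)

lemma restrict_Y:
  assumes B: "is_subalgebra B" and BA: "B \<subseteq> A" and y: "y \<in> Ychar A"
  shows "restrict y B \<in> Ychar B"
  unfolding Ychar_def
proof (intro CollectI conjI ballI allI)
  show "restrict y B \<in> extensional B" by simp
  fix a b assume ab: "a \<in> B" "b \<in> B"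
  then have "a \<in> A" "b \<in> A" using BA by auto
  show "restrict y B (\<lambda>x. a x + b x) = restrict y B a + restrict y B b"
    using ab sa_add[OF B ab] Y_add[OF y \<open>a \<in> A\<close> \<open>b \<in> A\<close>] by simp
  show "restrict y B (\<lambda>x. a x * b x) = restrict y B a * restrict y B b"
    using ab sa_mult[OF B ab] Y_mult[OF y \<open>a \<in> A\<close> \<open>b \<in> A\<close>] by simp
next
  fix c :: real and a assume a: "a \<in> B"
  then have "a \<in> A" using BA by auto
  show "restrict y B (\<lambda>x. c * a x) = c * restrict y B a"
    using a sa_smult[OF B a] Y_smult[OF y \<open>a \<in> A\<close>] by simp
next
  show "restrict y B (\<lambda>_. 1) = 1" using y sa_const[OF B] by (simp add: Ychar_def)
qed

lemma restrict_KY: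
  assumes B: "is_subalgebra B" and BA: "B \<subseteq> A" and y: "y \<in> KY A Q'" and QQ: "Q \<subseteq> Q'" and QB: "Q \<subseteq> B"
  shows "restrict y B \<in> KY B Q"
proof -
  have "y \<in> Ychar A" using y by (simp add: KY_def)
  then have "restrict y B \<in> Ychar B" by (rule restrict_Y[OF B BA])
  moreover have "\<forall>g\<in>Q. restrict y B g \<ge> 0" using y QQ QB by (auto simp: KY_def)
  ultimately show ?thesis by (simp add: KY_def)
qed

lemma base_approx:
  assumes g: "good B Q" and z: "z \<in> KY B Q" and F: "finite F" "F \<subseteq> B" and e: "\<epsilon> > 0"
  shows "\<exists>x. \<forall>c\<in>F. \<bar>c x - z c\<bar> < \<epsilon>"
proof -
  have zc: "z \<in> Ytop B closure_of (mmap B ` UNIV)" using g z by (simp add: good_def)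
  define N where "N = {w \<in> Ychar B. \<forall>c\<in>F. w c \<in> ball (z c) \<epsilon>}"
  have op: "openin (Ytop B) N"
    unfolding N_def by (rule open_basic[OF F]) simp
  have zY: "z \<in> Ychar B" using z by (simp add: KY_def)
  have "z \<in> N" unfolding N_def using zY e by simp
  then obtain w where w: "w \<in> mmap B ` UNIV" "w \<in> N"
    using zc op unfolding in_closure_of by blast
  then obtain x where wx: "w = mmap B x" by blast
  have "\<forall>c\<in>F. \<bar>c x - z c\<bar> < \<epsilon>"
  proof
    fix c assume "c \<in> F"
    then have "c \<in> B" "w c \<in> ball (z c) \<epsilon>" using F(2) w(2) unfolding N_def by auto
    then show "\<bar>c x - z c\<bar> < \<epsilon>" using wx by (simp add: mmap_def dist_real_def abs_minus_commute)
  qed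
  then show ?thesis by blast
qed

lemma good_adjoin:
  assumes B: "is_subalgebra B" and Qm: "is_quadmod B Q" and g: "good B Q"
    and S: "S \<subseteq> adjoin B f" and QS: "Q \<subseteq> S" and pos: "\<forall>s\<in>S. \<forall>x. s x \<ge> 0"
    and ap: "\<And>y F \<epsilon>. y \<in> KY (adjoin B f) (qm_gen (adjoin B f) S) \<Longrightarrow>
        (\<forall>F \<epsilon>. finite F \<longrightarrow> F \<subseteq> B \<longrightarrow> \<epsilon> > 0 \<longrightarrow> (\<exists>x. \<forall>c\<in>F. \<bar>c x - y c\<bar> < \<epsilon>)) \<Longrightarrow>
        finite F \<Longrightarrow> F \<subseteq> B \<Longrightarrow> \<epsilon> > 0 \<Longrightarrow>
        \<exists>x. (\<forall>c\<in>F. \<bar>c x - y c\<bar> < \<epsilon>) \<and> \<bar>f x - y f\<bar> < \<epsilon>"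
  shows "good (adjoin B f) (qm_gen (adjoin B f) S)"
proof -
  define A where "A = adjoin B f"
  define Q' where "Q' = qm_gen A S"
  have As: "is_subalgebra A" unfolding A_def by (rule adjoin_sa)
  have BA: "B \<subseteq> A" unfolding A_def by (rule adjoin_B)
  have QP: "Q' \<subseteq> {a \<in> A. \<forall>x. a x \<ge> 0}" unfolding Q'_def
    using S pos A_def by (intro qm_gen_least nonneg_quadmod As) auto
  have QB: "Q \<subseteq> B" using Qm by (simp add: is_quadmod_def)
  have QQ: "Q \<subseteq> Q'" using QS qm_gen_sub[of S A] unfolding Q'_def by auto
  have KX: "KX Q' = UNIV" using QP by (auto simp: KX_def)
  have sub1: "Ytop A closure_of (mmap A ` UNIV) \<subseteq> KY A Q'"
  proof (rule closure_of_minimal)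
    show "mmap A ` UNIV \<subseteq> KY A Q'" using QP mmap_Y[OF As] by (auto simp: KY_def mmap_def)
    show "closedin (Ytop A) (KY A Q')" using QP by (intro closed_KY) auto
  qed
  have sub2: "KY A Q' \<subseteq> Ytop A closure_of (mmap A ` UNIV)"
  proof
    fix y assume y: "y \<in> KY A Q'"
    have yr: "restrict y B \<in> KY B Q" using restrict_KY[OF B BA y QQ QB] .
    have base: "\<forall>F \<epsilon>. finite F \<longrightarrow> F \<subseteq> B \<longrightarrow> \<epsilon> > 0 \<longrightarrow> (\<exists>x. \<forall>c\<in>F. \<bar>c x - y c\<bar> < \<epsilon>)"
    proof (intro allI impI)
      fix F and \<epsilon> :: real assume "finite F" "F \<subseteq> B" "\<epsilon> > 0"
      from base_approx[OF g yr this] obtain x where x: "\<forall>c\<in>F. \<bar>c x - restrict y B c\<bar> < \<epsilon>" by blast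
      have "\<forall>c\<in>F. restrict y B c = y c" using \<open>F \<subseteq> B\<close> by auto
      with x show "\<exists>x. \<forall>c\<in>F. \<bar>c x - y c\<bar> < \<epsilon>" by auto
    qed
    have "y \<in> Ychar (adjoin B f)" using y by (simp add: KY_def A_def)
    then show "y \<in> Ytop A closure_of (mmap A ` UNIV)" unfolding A_def
      by (rule approx_in_closure[OF B]) (rule ap[OF y[unfolded A_def Q'_def] base])
  qed
  show ?thesis using KX sub1 sub2 unfolding good_def A_def Q'_def by auto
qed



lemma approx_comp:
  fixes y :: "('a \<Rightarrow> real) \<Rightarrow> real" and \<phi> :: "real \<Rightarrow> real"
  assumes base: "\<forall>F \<epsilon>. finite F \<longrightarrow> F \<subseteq> B \<longrightarrow> \<epsilon> > 0 \<longrightarrow> (\<exists>x. \<forall>c\<in>F. \<bar>c x - y c\<bar> < \<epsilon>)"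
    and gB: "g \<in> B" and fe: "f = (\<lambda>x. \<phi> (g x))" and yf: "y f = \<phi> (y g)"
    and cont: "isCont \<phi> (y g)"
    and F: "finite F" "F \<subseteq> B" and e: "\<epsilon> > 0"
  shows "\<exists>x. (\<forall>c\<in>F. \<bar>c x - y c\<bar> < \<epsilon>) \<and> \<bar>f x - y f\<bar> < \<epsilon>"
proof -
  obtain d where d: "d > 0" "\<And>t. dist t (y g) < d \<Longrightarrow> dist (\<phi> t) (\<phi> (y g)) < \<epsilon>"
    using cont e unfolding continuous_at_eps_delta by blast
  obtain x where x: "\<forall>c\<in>insert g F. \<bar>c x - y c\<bar> < min \<epsilon> d"
    using base F gB e d(1) by (metis finite_insert insert_subset min_less_iff_conj)
  then have "\<bar>\<phi> (g x) - \<phi> (y g)\<bar> < \<epsilon>" using d(2)[of "g x"] by (simp add: dist_real_def)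
  then show ?thesis using x fe yf by auto
qed

lemma KY_facts:
  assumes "y \<in> KY A (qm_gen A S)" "s \<in> S"
  shows "y \<in> Ychar A" "y s \<ge> 0"
  using assms qm_gen_sub[of S A] by (auto simp: KY_def)

lemma good_pos: "good B Q \<Longrightarrow> g \<in> Q \<Longrightarrow> g x \<ge> 0"
  unfolding good_def KX_def by blast

lemma case1:
  assumes B: "is_subalgebra B" and Qm: "is_quadmod B Q" and g: "good B Q"
    and r: "odd r" and gB: "g \<in> B" and fe: "f = (\<lambda>x. root r (g x))"
  shows "good (adjoin B f) (qm_gen (adjoin B f) Q)"
proof (rule good_adjoin[OF B Qm g])
  have QB: "Q \<subseteq> B" using Qm by (simp add: is_quadmod_def)
  then show "Q \<subseteq> adjoin B f" using adjoin_B by blast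
  show "Q \<subseteq> Q" by simp
  show "\<forall>s\<in>Q. \<forall>x. s x \<ge> 0" using good_pos[OF g] by blast
  fix y F and \<epsilon> :: real
  assume y: "y \<in> KY (adjoin B f) (qm_gen (adjoin B f) Q)"
    and base: "\<forall>F \<epsilon>. finite F \<longrightarrow> F \<subseteq> B \<longrightarrow> \<epsilon> > 0 \<longrightarrow> (\<exists>x. \<forall>c\<in>F. \<bar>c x - y c\<bar> < \<epsilon>)"
    and F: "finite F" "F \<subseteq> B" "\<epsilon> > 0"
  have yY: "y \<in> Ychar (adjoin B f)" using y by (simp add: KY_def)
  have fA: "f \<in> adjoin B f" by (rule adjoin_f)
  have "(\<lambda>x. f x ^ r) = g" using fe r by (simp add: odd_real_root_pow)
  then have "y g = y f ^ r" using Y_pow[OF adjoin_sa yY fA, of r] by simp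
  then have yf: "y f = root r (y g)" using r by (simp add: odd_real_root_power_cancel)
  show "\<exists>x. (\<forall>c\<in>F. \<bar>c x - y c\<bar> < \<epsilon>) \<and> \<bar>f x - y f\<bar> < \<epsilon>"
    by (rule approx_comp[OF base gB fe yf isCont_real_root F])
qed

lemma case2:
  assumes B: "is_subalgebra B" and Qm: "is_quadmod B Q" and g: "good B Q"
    and s: "s > 0" and gB: "g \<in> B" and gpos: "\<forall>x. g x \<ge> 0" and fe: "f = (\<lambda>x. root s (g x))"
  shows "good (adjoin B f) (qm_gen (adjoin B f) (Q \<union> {f}))"
proof (rule good_adjoin[OF B Qm g])
  have QB: "Q \<subseteq> B" using Qm by (simp add: is_quadmod_def)
  then show "Q \<union> {f} \<subseteq> adjoin B f" using adjoin_B adjoin_f by blast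
  show "Q \<subseteq> Q \<union> {f}" by blast
  show "\<forall>s\<in>Q \<union> {f}. \<forall>x. s x \<ge> 0" using good_pos[OF g] gpos fe by (auto intro: real_root_ge_zero)
  fix y F and \<epsilon> :: real
  assume y: "y \<in> KY (adjoin B f) (qm_gen (adjoin B f) (Q \<union> {f}))"
    and base: "\<forall>F \<epsilon>. finite F \<longrightarrow> F \<subseteq> B \<longrightarrow> \<epsilon> > 0 \<longrightarrow> (\<exists>x. \<forall>c\<in>F. \<bar>c x - y c\<bar> < \<epsilon>)"
    and F: "finite F" "F \<subseteq> B" "\<epsilon> > 0"
  have yY: "y \<in> Ychar (adjoin B f)" and yfp: "y f \<ge> 0" using KY_facts[OF y] by auto
  have fA: "f \<in> adjoin B f" by (rule adjoin_f)
  have "(\<lambda>x. f x ^ s) = g" using fe s gpos by simp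
  then have "y g = y f ^ s" using Y_pow[OF adjoin_sa yY fA, of s] by simp
  then have yf: "y f = root s (y g)" using s yfp by (simp add: real_root_power_cancel)
  show "\<exists>x. (\<forall>c\<in>F. \<bar>c x - y c\<bar> < \<epsilon>) \<and> \<bar>f x - y f\<bar> < \<epsilon>"
    by (rule approx_comp[OF base gB fe yf isCont_real_root F])
qed

lemma case3:
  assumes B: "is_subalgebra B" and Qm: "is_quadmod B Q" and g: "good B Q"
    and gB: "g \<in> B" and gnz: "\<forall>x. g x \<noteq> 0" and fe: "f = (\<lambda>x. 1 / g x)"
  shows "good (adjoin B f) (qm_gen (adjoin B f) Q)"
proof (rule good_adjoin[OF B Qm g])
  have QB: "Q \<subseteq> B" using Qm by (simp add: is_quadmod_def)
  then show "Q \<subseteq> adjoin B f" using adjoin_B by blast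
  show "Q \<subseteq> Q" by simp
  show "\<forall>s\<in>Q. \<forall>x. s x \<ge> 0" using good_pos[OF g] by blast
  fix y F and \<epsilon> :: real
  assume y: "y \<in> KY (adjoin B f) (qm_gen (adjoin B f) Q)"
    and base: "\<forall>F \<epsilon>. finite F \<longrightarrow> F \<subseteq> B \<longrightarrow> \<epsilon> > 0 \<longrightarrow> (\<exists>x. \<forall>c\<in>F. \<bar>c x - y c\<bar> < \<epsilon>)"
    and F: "finite F" "F \<subseteq> B" "\<epsilon> > 0"
  have yY: "y \<in> Ychar (adjoin B f)" using y by (simp add: KY_def)
  have fA: "f \<in> adjoin B f" by (rule adjoin_f)
  have gA: "g \<in> adjoin B f" using gB adjoin_B by blast
  have "(\<lambda>x. f x * g x) = (\<lambda>_. 1)" using fe gnz by simp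
  then have "y f * y g = 1" using Y_mult[OF yY fA gA] Y_const[OF adjoin_sa yY, of 1] by simp
  then have yg: "y g \<noteq> 0" by auto
  then have yf: "y f = 1 / y g" using \<open>y f * y g = 1\<close> by (simp add: field_simps)
  have cont: "isCont (\<lambda>t. 1 / t) (y g)" using yg by (intro continuous_intros) auto
  show "\<exists>x. (\<forall>c\<in>F. \<bar>c x - y c\<bar> < \<epsilon>) \<and> \<bar>f x - y f\<bar> < \<epsilon>"
    by (rule approx_comp[OF base gB fe yf cont F])
qed



lemma case4:
  assumes B: "is_subalgebra B" and Qm: "is_quadmod B Q" and gd: "good B Q"
    and gB: "g \<in> B" and hB: "h \<in> B" and qB: "q \<in> B"
    and fe: "f = (\<lambda>x. if q x \<ge> 0 then g x else h x)"
    and hyp: "\<forall>y\<in>KY B Q. y q = 0 \<longrightarrow> y g = y h"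
  shows "good (adjoin B f) (qm_gen (adjoin B f)
              (Q \<union> {\<lambda>x. - (q x * (f x - g x)\<^sup>2), \<lambda>x. q x * (f x - h x)\<^sup>2}))"
proof (rule good_adjoin[OF B Qm gd])
  define A where "A = adjoin B f"
  have As: "is_subalgebra A" unfolding A_def by (rule adjoin_sa)
  have QB: "Q \<subseteq> B" using Qm by (simp add: is_quadmod_def)
  have fA: "f \<in> A" unfolding A_def by (rule adjoin_f)
  have gA: "g \<in> A" and hA: "h \<in> A" and qA: "q \<in> A" using gB hB qB adjoin_B unfolding A_def by blast+
  have n1: "(\<lambda>x. - (q x * (f x - g x)\<^sup>2)) \<in> A" using As fA gA qA by (simp add: sa_simps)
  have n2: "(\<lambda>x. q x * (f x - h x)\<^sup>2) \<in> A" using As fA hA qA by (simp add: sa_simps)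
  show "Q \<union> {\<lambda>x. - (q x * (f x - g x)\<^sup>2), \<lambda>x. q x * (f x - h x)\<^sup>2} \<subseteq> adjoin B f"
    using QB adjoin_B n1 n2 unfolding A_def by blast
  show "Q \<subseteq> Q \<union> {\<lambda>x. - (q x * (f x - g x)\<^sup>2), \<lambda>x. q x * (f x - h x)\<^sup>2}" by blast
  show "\<forall>s\<in>Q \<union> {\<lambda>x. - (q x * (f x - g x)\<^sup>2), \<lambda>x. q x * (f x - h x)\<^sup>2}. \<forall>x. s x \<ge> 0"
    using good_pos[OF gd] fe by (auto simp: mult_nonneg_nonpos mult_nonpos_nonneg)
  fix y F and \<epsilon> :: real
  assume y: "y \<in> KY (adjoin B f) (qm_gen (adjoin B f)
              (Q \<union> {\<lambda>x. - (q x * (f x - g x)\<^sup>2), \<lambda>x. q x * (f x - h x)\<^sup>2}))"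
    and base: "\<forall>F \<epsilon>. finite F \<longrightarrow> F \<subseteq> B \<longrightarrow> \<epsilon> > 0 \<longrightarrow> (\<exists>x. \<forall>c\<in>F. \<bar>c x - y c\<bar> < \<epsilon>)"
    and F: "finite F" "F \<subseteq> B" "\<epsilon> > 0"
  have yY: "y \<in> Ychar A" using y unfolding A_def by (simp add: KY_def)
  have p1: "y (\<lambda>x. - (q x * (f x - g x)\<^sup>2)) \<ge> 0" using KY_facts(2)[OF y] by blast
  have p2: "y (\<lambda>x. q x * (f x - h x)\<^sup>2) \<ge> 0" using KY_facts(2)[OF y] by blast
  note YS = Y_add[OF yY] Y_mult[OF yY] Y_smult[OF yY] Y_neg[OF yY] Y_diff[OF As yY] Y_pow[OF As yY] Y_const[OF As yY]
  have "y (\<lambda>x. - (q x * (f x - g x)\<^sup>2)) = - (y q * (y f - y g)\<^sup>2)"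
    using As yY fA gA qA by (simp add: sa_simps YS)
  then have e1: "- (y q * (y f - y g)\<^sup>2) \<ge> 0" using p1 by simp
  have "y (\<lambda>x. q x * (f x - h x)\<^sup>2) = y q * (y f - y h)\<^sup>2"
    using As yY fA hA qA by (simp add: sa_simps YS)
  then have e2: "y q * (y f - y h)\<^sup>2 \<ge> 0" using p2 by simp
  have z: "(\<lambda>x. (f x - g x) * (f x - h x)) = (\<lambda>_. 0)" using fe by auto
  have "y (\<lambda>x. (f x - g x) * (f x - h x)) = (y f - y g) * (y f - y h)"
    using As yY fA gA hA by (simp add: sa_simps YS)
  then have e3: "(y f - y g) * (y f - y h) = 0" using z Y_const[OF As yY, of 0] by simp
  have QQ: "Q \<subseteq> qm_gen A (Q \<union> {\<lambda>x. - (q x * (f x - g x)\<^sup>2), \<lambda>x. q x * (f x - h x)\<^sup>2})"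
    using qm_gen_sub by blast
  have yr: "restrict y B \<in> KY B Q"
    by (rule restrict_KY[OF B _ _ QQ QB]) (use adjoin_B y in \<open>auto simp: A_def\<close>)
  have FF: "finite (insert q (insert g (insert h F)))" "insert q (insert g (insert h F)) \<subseteq> B"
    using F gB hB qB by auto
  consider "y q > 0" | "y q < 0" | "y q = 0" by linarith
  then show "\<exists>x. (\<forall>c\<in>F. \<bar>c x - y c\<bar> < \<epsilon>) \<and> \<bar>f x - y f\<bar> < \<epsilon>"
  proof cases
    case 1
    then have "(y f - y g)\<^sup>2 \<le> 0" using e1 by (simp add: mult_le_0_iff)
    then have yf: "y f = y g" by simp
    obtain x where x: "\<forall>c\<in>insert q (insert g (insert h F)). \<bar>c x - y c\<bar> < min \<epsilon> (y q)"
      using base FF F(3) 1 by (metis min_less_iff_conj)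
    then have "q x > 0" by auto
    then show ?thesis using x yf fe by auto
  next
    case 2
    then have "(y f - y h)\<^sup>2 \<le> 0" using e2 by (smt (verit) mult_neg_pos zero_le_power2 power2_less_0)
    then have yf: "y f = y h" by simp
    obtain x where x: "\<forall>c\<in>insert q (insert g (insert h F)). \<bar>c x - y c\<bar> < min \<epsilon> (- y q)"
      using base FF F(3) 2 by (metis min_less_iff_conj neg_0_less_iff_less)
    then have "q x < 0" by auto
    then show ?thesis using x yf fe by auto
  next
    case 3
    have "restrict y B q = 0" using 3 qB by simp
    then have "restrict y B g = restrict y B h" using hyp yr by blast
    then have ygh: "y g = y h" using gB hB by simp
    then have yf: "y f = y g" using e3 by simp
    obtain x where x: "\<forall>c\<in>insert q (insert g (insert h F)). \<bar>c x - y c\<bar> < \<epsilon>"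
      using base FF F(3) by metis
    then show ?thesis using yf ygh fe by auto
  qed
qed



lemma side_approx:
  assumes gd: "good B Q" and qB: "q \<in> B" and oP: "open {t. P t}"
    and w: "w \<in> Ytop B closure_of {z \<in> KY B Q. P (z q)}"
    and F: "finite F" "F \<subseteq> B" and e: "\<epsilon> > 0"
  shows "\<exists>x. (\<forall>c\<in>F. \<bar>c x - w c\<bar> < \<epsilon>) \<and> P (q x)"
proof -
  define S where "S = {z \<in> KY B Q. P (z q)}"
  have cl: "w \<in> topspace (Ytop B)" "\<And>T. w \<in> T \<Longrightarrow> openin (Ytop B) T \<Longrightarrow> \<exists>y. y \<in> S \<and> y \<in> T"
    using w unfolding in_closure_of S_def[symmetric] by blast+
  have wY: "w \<in> Ychar B" using cl(1) by (simp add: topspace_Ytop)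
  define N where "N = {v \<in> Ychar B. \<forall>c\<in>F. v c \<in> ball (w c) \<epsilon>}"
  have op: "openin (Ytop B) N" unfolding N_def by (rule open_basic[OF F]) simp
  have "w \<in> N" unfolding N_def using wY e by simp
  from cl(2)[OF this op] obtain z where z0: "z \<in> S" "z \<in> N" by blast
  then have z: "z \<in> KY B Q" "P (z q)" unfolding S_def by auto
  define N2 where "N2 = {v \<in> Ychar B. \<forall>c\<in>{q}. v c \<in> {t. P t}}"
  have op2: "openin (Ytop B) N2" unfolding N2_def
    by (rule open_basic) (use qB oP in auto)
  have zc: "z \<in> Ytop B closure_of (mmap B ` UNIV)" using gd z(1) by (simp add: good_def)
  have zY: "z \<in> Ychar B" using z(1) by (simp add: KY_def)
  have "z \<in> N \<inter> N2" using z0(2) z(2) zY unfolding N2_def by simp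
  from zc[unfolded in_closure_of] this openin_Int[OF op op2]
  obtain v where v: "v \<in> mmap B ` UNIV" "v \<in> N \<inter> N2" by blast
  then obtain x where vx: "v = mmap B x" by blast
  have "\<forall>c\<in>F. \<bar>c x - w c\<bar> < \<epsilon>"
  proof
    fix c assume "c \<in> F"
    then have "c \<in> B" "v c \<in> ball (w c) \<epsilon>" using F(2) v(2) unfolding N_def by auto
    then show "\<bar>c x - w c\<bar> < \<epsilon>" using vx by (simp add: mmap_def dist_real_def abs_minus_commute)
  qed
  moreover have "P (q x)" using v(2) vx qB unfolding N2_def by (simp add: mmap_def)
  ultimately show ?thesis by blast
qed

lemma case5:
  assumes B: "is_subalgebra B" and Qm: "is_quadmod B Q" and gd: "good B Q"
    and qB: "q \<in> B"
    and fe: "f = (\<lambda>x. if q x \<ge> 0 then 1 else 0)"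
    and hyp: "{y \<in> KY B Q. y q = 0} \<subseteq>
          (Ytop B) closure_of {y \<in> KY B Q. y q > 0} \<inter> (Ytop B) closure_of {y \<in> KY B Q. y q < 0}"
  shows "good (adjoin B f) (qm_gen (adjoin B f)
              (Q \<union> {\<lambda>x. q x * f x, \<lambda>x. q x * (f x - 1)}))"
proof (rule good_adjoin[OF B Qm gd])
  define A where "A = adjoin B f"
  have As: "is_subalgebra A" unfolding A_def by (rule adjoin_sa)
  have QB: "Q \<subseteq> B" using Qm by (simp add: is_quadmod_def)
  have fA: "f \<in> A" unfolding A_def by (rule adjoin_f)
  have qA: "q \<in> A" using qB adjoin_B unfolding A_def by blast
  have n1: "(\<lambda>x. q x * f x) \<in> A" using As fA qA by (simp add: sa_simps)
  have n2: "(\<lambda>x. q x * (f x - 1)) \<in> A" using As fA qA by (simp add: sa_simps)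
  show "Q \<union> {\<lambda>x. q x * f x, \<lambda>x. q x * (f x - 1)} \<subseteq> adjoin B f"
    using QB adjoin_B n1 n2 unfolding A_def by blast
  show "Q \<subseteq> Q \<union> {\<lambda>x. q x * f x, \<lambda>x. q x * (f x - 1)}" by blast
  show "\<forall>s\<in>Q \<union> {\<lambda>x. q x * f x, \<lambda>x. q x * (f x - 1)}. \<forall>x. s x \<ge> 0"
    using good_pos[OF gd] fe by auto
  fix y F and \<epsilon> :: real
  assume y: "y \<in> KY (adjoin B f) (qm_gen (adjoin B f) (Q \<union> {\<lambda>x. q x * f x, \<lambda>x. q x * (f x - 1)}))"
    and base: "\<forall>F \<epsilon>. finite F \<longrightarrow> F \<subseteq> B \<longrightarrow> \<epsilon> > 0 \<longrightarrow> (\<exists>x. \<forall>c\<in>F. \<bar>c x - y c\<bar> < \<epsilon>)"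
    and F: "finite F" "F \<subseteq> B" "\<epsilon> > 0"
  have yY: "y \<in> Ychar A" using y unfolding A_def by (simp add: KY_def)
  note YS = Y_add[OF yY] Y_mult[OF yY] Y_smult[OF yY] Y_neg[OF yY] Y_diff[OF As yY] Y_pow[OF As yY] Y_const[OF As yY]
  have p1: "y (\<lambda>x. q x * f x) \<ge> 0" using KY_facts(2)[OF y] by blast
  have p2: "y (\<lambda>x. q x * (f x - 1)) \<ge> 0" using KY_facts(2)[OF y] by blast
  have "y (\<lambda>x. q x * f x) = y q * y f" using As yY fA qA by (simp add: sa_simps YS)
  then have e1: "y q * y f \<ge> 0" using p1 by simp
  have "y (\<lambda>x. q x * (f x - 1)) = y q * (y f - 1)" using As yY fA qA by (simp add: sa_simps YS)
  then have e2: "y q * (y f - 1) \<ge> 0" using p2 by simp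
  have z: "(\<lambda>x. f x * f x) = f" using fe by auto
  have "y (\<lambda>x. f x * f x) = y f * y f" using As yY fA by (simp add: sa_simps YS)
  then have "y f * y f = y f" using z by simp
  then have "y f * (y f - 1) = 0" by (simp add: algebra_simps)
  then have e3: "y f = 0 \<or> y f = 1" by simp
  have QQ: "Q \<subseteq> qm_gen A (Q \<union> {\<lambda>x. q x * f x, \<lambda>x. q x * (f x - 1)})"
    using qm_gen_sub by blast
  have yr: "restrict y B \<in> KY B Q"
    by (rule restrict_KY[OF B _ _ QQ QB]) (use adjoin_B y in \<open>auto simp: A_def\<close>)
  have FF: "finite (insert q F)" "insert q F \<subseteq> B" using F qB by auto
  consider "y q > 0" | "y q < 0" | "y q = 0" by linarith
  then show "\<exists>x. (\<forall>c\<in>F. \<bar>c x - y c\<bar> < \<epsilon>) \<and> \<bar>f x - y f\<bar> < \<epsilon>"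
  proof cases
    case 1
    then have yf: "y f = 1" using e2 e3 by (auto simp: zero_le_mult_iff)
    obtain x where x: "\<forall>c\<in>insert q F. \<bar>c x - y c\<bar> < min \<epsilon> (y q)"
      using base FF F(3) 1 by (metis min_less_iff_conj)
    then have "q x > 0" by auto
    then show ?thesis using x yf fe F(3) by auto
  next
    case 2
    then have yf: "y f = 0" using e1 e3 by (auto simp: zero_le_mult_iff)
    obtain x where x: "\<forall>c\<in>insert q F. \<bar>c x - y c\<bar> < min \<epsilon> (- y q)"
      using base FF F(3) 2 by (metis min_less_iff_conj neg_0_less_iff_less)
    then have "q x < 0" by auto
    then show ?thesis using x yf fe F(3) by auto
  next
    case 3
    have "restrict y B q = 0" using 3 qB by simp
    then have yrc: "restrict y B \<in> Ytop B closure_of {z \<in> KY B Q. z q > 0}"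
        "restrict y B \<in> Ytop B closure_of {z \<in> KY B Q. z q < 0}"
      using hyp yr by blast+
    have o1: "open {t::real. t < 0}" using open_lessThan[of "0::real"] by (simp add: lessThan_def)
    have o2: "open {t::real. t > 0}" using open_greaterThan[of "0::real"] by (simp add: greaterThan_def)
    have rF: "\<forall>c\<in>F. restrict y B c = y c" using F(2) by auto
    from e3 show ?thesis
    proof
      assume yf: "y f = 0"
      obtain x where x: "\<forall>c\<in>F. \<bar>c x - restrict y B c\<bar> < \<epsilon>" "q x < 0"
        using side_approx[OF gd qB o1 yrc(2) F] by blast
      then show ?thesis using yf fe rF F(3) by auto
    next
      assume yf: "y f = 1"
      obtain x where x: "\<forall>c\<in>F. \<bar>c x - restrict y B c\<bar> < \<epsilon>" "q x > 0"
        using side_approx[OF gd qB o2 yrc(1) F] by blast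
      then show ?thesis using yf fe rF F(3) by auto
    qed
  qed
qed


theorem proposition3p3:
  fixes B Q :: "('a \<Rightarrow> real) set" and f :: "'a \<Rightarrow> real"
  assumes "is_subalgebra B"
    and "is_quadmod B Q"
    and "good B Q"
  shows
   "(\<forall>r g. odd r \<and> g \<in> B \<and> f = (\<lambda>x. root r (g x))
        \<longrightarrow> good (adjoin B f) (qm_gen (adjoin B f) Q)) \<and>
    (\<forall>s g. even s \<and> s > 0 \<and> g \<in> B \<and> (\<forall>x. g x \<ge> 0) \<and> f = (\<lambda>x. root s (g x))
        \<longrightarrow> good (adjoin B f) (qm_gen (adjoin B f) (Q \<union> {f}))) \<and>
    (\<forall>g. g \<in> B \<and> (\<forall>x. g x \<noteq> 0) \<and> f = (\<lambda>x. 1 / g x)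
        \<longrightarrow> good (adjoin B f) (qm_gen (adjoin B f) Q)) \<and>
    (\<forall>g h q. g \<in> B \<and> h \<in> B \<and> q \<in> B \<and>
        f = (\<lambda>x. if q x \<ge> 0 then g x else h x) \<and>
        (\<forall>y\<in>KY B Q. y q = 0 \<longrightarrow> y g = y h)
        \<longrightarrow> good (adjoin B f) (qm_gen (adjoin B f)
              (Q \<union> {\<lambda>x. - (q x * (f x - g x)\<^sup>2), \<lambda>x. q x * (f x - h x)\<^sup>2}))) \<and>
    (\<forall>q. q \<in> B \<and> f = (\<lambda>x. if q x \<ge> 0 then 1 else 0) \<and>
        {y \<in> KY B Q. y q = 0} \<subseteq>
          (Ytop B) closure_of {y \<in> KY B Q. y q > 0} \<inter> (Ytop B) closure_of {y \<in> KY B Q. y q < 0}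
        \<longrightarrow> good (adjoin B f) (qm_gen (adjoin B f)
              (Q \<union> {\<lambda>x. q x * f x, \<lambda>x. q x * (f x - 1)})))"
proof (intro conjI allI impI)
  fix r g assume "odd r \<and> g \<in> B \<and> f = (\<lambda>x. root r (g x))"
  then show "good (adjoin B f) (qm_gen (adjoin B f) Q)"
    using case1[OF assms] by blast
next
  fix s g assume "even s \<and> s > 0 \<and> g \<in> B \<and> (\<forall>x. g x \<ge> 0) \<and> f = (\<lambda>x. root s (g x))"
  then show "good (adjoin B f) (qm_gen (adjoin B f) (Q \<union> {f}))"
    using case2[OF assms] by blast
next
  fix g assume "g \<in> B \<and> (\<forall>x. g x \<noteq> 0) \<and> f = (\<lambda>x. 1 / g x)"
  then show "good (adjoin B f) (qm_gen (adjoin B f) Q)"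
    using case3[OF assms] by blast
next
  fix g h q assume "g \<in> B \<and> h \<in> B \<and> q \<in> B \<and>
        f = (\<lambda>x. if q x \<ge> 0 then g x else h x) \<and>
        (\<forall>y\<in>KY B Q. y q = 0 \<longrightarrow> y g = y h)"
  then show "good (adjoin B f) (qm_gen (adjoin B f)
              (Q \<union> {\<lambda>x. - (q x * (f x - g x)\<^sup>2), \<lambda>x. q x * (f x - h x)\<^sup>2}))"
    using case4[OF assms] by blast
next
  fix q assume "q \<in> B \<and> f = (\<lambda>x. if q x \<ge> 0 then 1 else 0) \<and>
        {y \<in> KY B Q. y q = 0} \<subseteq>
          (Ytop B) closure_of {y \<in> KY B Q. y q > 0} \<inter> (Ytop B) closure_of {y \<in> KY B Q. y q < 0}"
  then show "good (adjoin B f) (qm_gen (adjoin B f)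
              (Q \<union> {\<lambda>x. q x * f x, \<lambda>x. q x * (f x - 1)}))"
    using case5[OF assms] by blast
qed

end
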